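(* There exists a constant $r_b>0$, depending on $r$, and a constant $C>0$ such that for all $\varepsilon>0$: (1) if $\xi\in\mathbb{H}^N$ and $\eta\in\mathbb{H}^N\setminus B_r(0)$ satisfy $|\eta^{-1}\circ\xi|\le r_b$, then $|u_\varepsilon(\xi)-u_\varepsilon(\eta)|\le C\varepsilon^{\frac{Q-2s}{2}}|\eta^{-1}\circ\xi|$; (2) if $\xi,\eta\in\mathbb{H}^N\setminus B_r(0)$, then $|u_\varepsilon(\xi)-u_\varepsilon(\eta)|\le C\varepsilon^{\frac{Q-2s}{2}}\min\{1,|\eta^{-1}\circ\xi|\}$.
   Context: $\mathbb{H}^N=\mathbb{R}^{2N+1}$ with group law $\xi\circ\xi'=(x+x',y+y',t+t'+2(x'\cdot y-y'\cdot x))$, $Q=2N+2$, dilations $\delta_a(x,y,t)=(ax,ay,a^2t)$, homogeneous norm $|\xi|=((|x|^2+|y|^2)^2+t^2)^{1/4}$, balls $B_r(0)=\{|\xi|<r\}$, $s\in(0,1)$, $Q^*_s=\frac{2Q}{Q-2s}$. $S_s>0$ is the sharp fractional Sobolev constant on $\mathbb{H}^N$. $U(x,y,t)=C_0(t^2+(1+|x|^2+|y|^2)^2)^{-\frac{Q-2s}{4}}$ ($C_0>0$), $\overline{u}=U/\|U\|_{L^{Q^*_s}(\mathbb{H}^N)}$, $u^*(\xi)=\overline{u}(\delta_{S_s^{-1/(2s)}}(\xi))$, $U_\varepsilon(\xi)=\varepsilon^{-\frac{Q-2s}{2}}u^*(\delta_{1/\varepsilon}(\xi))$. $\Omega\subseteq\mathbb{H}^N$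 is bounded open, $r>0$ with $B_{4r}(0)\subset\Omega$, $\phi\in C^\infty(\mathbb{H}^N)$, $0\le\phi\le1$, $\phi=1$ on $B_r(0)$, $\phi=0$ outside $B_{2r}(0)$, and $u_\varepsilon=U_\varepsilon\phi$. *)

theory Defs
  imports "HOL-Analysis.Analysis"
begin

type_synonym 'n heis = "(real^'n) \<times> (real^'n) \<times> real"

definition heis_mult :: "'n::finite heis \<Rightarrow> 'n heis \<Rightarrow> 'n heis" where
  "heis_mult p q = (case p of (x, y, t) \<Rightarrow> case q of (x', y', t') \<Rightarrow>
     (x + x', y + y', t + t' + 2 * (x' \<bullet> y - y' \<bullet> x)))"

definition heis_inv :: "'n::finite heis \<Rightarrow> 'n heis" where
  "heis_inv p = (case p of (x, y, t) \<Rightarrow> (-x, -y, -t))"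

definition heis_norm :: "'n::finite heis \<Rightarrow> real" where
  "heis_norm p = (case p of (x, y, t) \<Rightarrow>
     ((norm x ^ 2 + norm y ^ 2) ^ 2 + t ^ 2) powr (1/4))"

definition heis_dil :: "real \<Rightarrow> 'n::finite heis \<Rightarrow> 'n heis" where
  "heis_dil a p = (case p of (x, y, t) \<Rightarrow> (a *\<^sub>R x, a *\<^sub>R y, a ^ 2 * t))"

definition heis_ball :: "real \<Rightarrow> 'n::finite heis set" where
  "heis_ball \<rho> = {p. heis_norm p < \<rho>}"

text \<open>Homogeneous dimension Q = 2N+2, determined by the point type.\<close>
definition heis_Q :: "'n::finite heis \<Rightarrow> real" where
  "heis_Q p = real (2 * CARD('n) + 2)"

definition crit_exp :: "'n::finite heis \<Rightarrow> real \<Rightarrow> real" where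
  "crit_exp p s = 2 * heis_Q p / (heis_Q p - 2 * s)"

definition bubble_U :: "real \<Rightarrow> real \<Rightarrow> 'n::finite heis \<Rightarrow> real" where
  "bubble_U C0 s p = (case p of (x, y, t) \<Rightarrow>
     C0 * (t ^ 2 + (1 + norm x ^ 2 + norm y ^ 2) ^ 2) powr (- (heis_Q p - 2 * s) / 4))"

definition Lp_norm :: "real \<Rightarrow> ('a::euclidean_space \<Rightarrow> real) \<Rightarrow> real" where
  "Lp_norm q f = (\<integral>z. \<bar>f z\<bar> powr q \<partial>lborel) powr (1 / q)"

definition bubble_ubar :: "real \<Rightarrow> real \<Rightarrow> 'n::finite heis \<Rightarrow> real" where
  "bubble_ubar C0 s p = bubble_U C0 s p /
      Lp_norm (crit_exp p s) (bubble_U C0 s :: 'n heis \<Rightarrow> real)"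

definition bubble_ustar :: "real \<Rightarrow> real \<Rightarrow> real \<Rightarrow> 'n::finite heis \<Rightarrow> real" where
  "bubble_ustar S C0 s p = bubble_ubar C0 s (heis_dil (S powr (- 1 / (2 * s))) p)"

definition bubble_Ueps :: "real \<Rightarrow> real \<Rightarrow> real \<Rightarrow> real \<Rightarrow> 'n::finite heis \<Rightarrow> real" where
  "bubble_Ueps S C0 s \<epsilon> p =
     \<epsilon> powr (- (heis_Q p - 2 * s) / 2) * bubble_ustar S C0 s (heis_dil (1 / \<epsilon>) p)"

fun Ck :: "nat \<Rightarrow> ('a::euclidean_space \<Rightarrow> real) \<Rightarrow> bool" where
  "Ck 0 f = continuous_on UNIV f"
| "Ck (Suc k) f = ((\<forall>x. f differentiable (at x)) \<and>
      (\<forall>v\<in>Basis. Ck k (\<lambda>x. frechet_derivative f (at x) v)))"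

definition smooth_fun :: "('a::euclidean_space \<Rightarrow> real) \<Rightarrow> bool" where
  "smooth_fun f \<longleftrightarrow> (\<forall>k. Ck k f)"

end

theory Submission
  imports Defs "HOL-Analysis.Analysis"
begin


lemma phi_lip:
  fixes \<phi> :: "'a::euclidean_space \<Rightarrow> real"
  assumes "Ck (Suc 0) \<phi>"
  shows "\<exists>L. \<forall>x y. norm x \<le> R \<longrightarrow> norm y \<le> R \<longrightarrow> \<bar>\<phi> x - \<phi> y\<bar> \<le> L * norm (x - y)"
proof -
  define D where "D x = frechet_derivative \<phi> (at x)" for x
  have dif: "\<And>x. (\<phi> has_derivative D x) (at x)"
    using assms by (simp add: D_def frechet_derivative_works)
  have cont: "\<And>b. b \<in> Basis \<Longrightarrow> continuous_on UNIV (\<lambda>x. D x b)"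
    using assms by (simp add: D_def)
  have "continuous_on (cball 0 R) (\<lambda>x. \<Sum>b\<in>Basis. \<bar>D x b\<bar>)"
    by (intro continuous_intros continuous_on_subset[OF cont]) auto
  then have bnd: "bounded ((\<lambda>x. \<Sum>b\<in>Basis. \<bar>D x b\<bar>) ` cball 0 R)"
    by (intro compact_imp_bounded compact_continuous_image) auto
  then obtain M where M: "\<And>x. x \<in> cball 0 R \<Longrightarrow> norm (\<Sum>b\<in>Basis. \<bar>D x b\<bar>) \<le> M"
  proof -
    fix thesis assume th: "\<And>M. (\<And>x. x \<in> cball 0 R \<Longrightarrow> norm (\<Sum>b\<in>Basis. \<bar>D x b\<bar>) \<le> M) \<Longrightarrow> thesis"
    from bnd obtain a where "\<forall>y\<in>((\<lambda>x. \<Sum>b\<in>Basis. \<bar>D x b\<bar>) ` cball 0 R). norm y \<le> a"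
      unfolding bounded_iff by blast
    then show thesis by (intro th[of a]) blast
  qed
  have onb: "onorm (D x) \<le> M" if "x \<in> cball 0 R" for x
  proof (rule onorm_le)
    fix v :: 'a
    have lin: "linear (D x)" using dif has_derivative_linear by blast
    have "D x v = D x (\<Sum>b\<in>Basis. (v \<bullet> b) *\<^sub>R b)" by (simp add: euclidean_representation)
    also have "\<dots> = (\<Sum>b\<in>Basis. (v \<bullet> b) * D x b)"
      using lin by (simp add: linear_sum linear_scale)
    finally have "norm (D x v) \<le> (\<Sum>b\<in>Basis. \<bar>v \<bullet> b\<bar> * \<bar>D x b\<bar>)"
      by (auto intro: order_trans[OF sum_abs] simp: abs_mult)
    also have "\<dots> \<le> (\<Sum>b\<in>Basis. norm v * \<bar>D x b\<bar>)"
      by (intro sum_mono mult_right_mono) (auto simp: Basis_le_norm)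
    also have "\<dots> = norm v * (\<Sum>b\<in>Basis. \<bar>D x b\<bar>)" by (simp add: sum_distrib_left)
    also have "\<dots> \<le> norm v * M" using M[OF that] by (intro mult_left_mono) auto
    finally show "norm (D x v) \<le> M * norm v" by (simp add: mult.commute)
  qed
  show ?thesis
  proof (intro exI allI impI)
    fix x y :: 'a assume "norm x \<le> R" "norm y \<le> R"
    then have "norm (\<phi> x - \<phi> y) \<le> M * norm (x - y)"
      by (intro differentiable_bound[where S="cball 0 R" and f'=D])
         (auto intro: has_derivative_at_withinI dif onb)
    then show "\<bar>\<phi> x - \<phi> y\<bar> \<le> M * norm (x - y)" by simp
  qed
qed


definition Wf :: "real \<Rightarrow> real \<Rightarrow> 'n::finite heis \<Rightarrow> real" where
  "Wf lam e p = lam^4 * (snd (snd p))^2 + (e^2 + lam^2 * (fst p \<bullet> fst p + fst (snd p) \<bullet> fst (snd p)))^2"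

definition Wd :: "real \<Rightarrow> real \<Rightarrow> 'n::finite heis \<Rightarrow> 'n heis \<Rightarrow> real" where
  "Wd lam e p v = lam^4 * (2 * snd (snd p) * snd (snd v)) +
     2 * (e^2 + lam^2 * (fst p \<bullet> fst p + fst (snd p) \<bullet> fst (snd p))) *
       (lam^2 * (2 * (fst p \<bullet> fst v) + 2 * (fst (snd p) \<bullet> fst (snd v))))"

lemma Wf_deriv: "(Wf lam e has_derivative Wd lam e p) (at p within X)"
  unfolding Wf_def[abs_def] Wd_def
  by (rule derivative_eq_intros refl | simp)+ (simp add: inner_commute algebra_simps)

lemma norm_heis_sq: "norm (p::'n::finite heis)^2 = fst p \<bullet> fst p + fst (snd p) \<bullet> fst (snd p) + (snd (snd p))^2"
  by (simp add: norm_prod_def power2_norm_eq_inner[symmetric])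

lemma comps_le_norm:
  fixes p :: "'n::finite heis"
  shows "norm (fst p) \<le> norm p" "norm (fst (snd p)) \<le> norm p" "\<bar>snd (snd p)\<bar> \<le> norm p"
proof -
  have a: "norm (fst q) \<le> norm q" "norm (snd q) \<le> norm q" for q :: "'c::real_normed_vector \<times> 'd::real_normed_vector"
    by (simp_all add: norm_prod_def real_le_rsqrt)
  have "norm (fst p) \<le> norm p" by (rule a)
  moreover have "norm (fst (snd p)) \<le> norm p"
    using a(1)[of "snd p"] a(2)[of p] by linarith
  moreover have "\<bar>snd (snd p)\<bar> \<le> norm p"
    using a(2)[of "snd p"] a(2)[of p] by simp
  ultimately show "norm (fst p) \<le> norm p" "norm (fst (snd p)) \<le> norm p" "\<bar>snd (snd p)\<bar> \<le> norm p" by auto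
qed

lemma Wf_lower:
  fixes p :: "'n::finite heis"
  assumes "lam > 0" "\<delta> > 0" "\<delta> \<le> norm p"
  shows "Wf lam e p \<ge> lam^4 * min (\<delta>^4/4) (\<delta>^2/2)"
proof -
  define n where "n = fst p \<bullet> fst p + fst (snd p) \<bullet> fst (snd p)"
  define t where "t = snd (snd p)"
  have n0: "n \<ge> 0" by (simp add: n_def)
  have "\<delta>^2 \<le> norm p ^2" using assms by (intro power_mono) auto
  then have nt: "\<delta>^2 \<le> n + t^2" using norm_heis_sq[of p] by (simp add: n_def t_def)
  have key: "t^2 + n^2 \<ge> min (\<delta>^4/4) (\<delta>^2/2)"
  proof (cases "n \<ge> \<delta>^2/2")
    case True
    then have "n^2 \<ge> (\<delta>^2/2)^2" by (intro power_mono) auto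
    then show ?thesis by (auto simp: power_divide power2_eq_square[symmetric] power_mult[symmetric] min_le_iff_disj)
        (smt (verit) zero_le_power2 numeral_Bit0 power_mult)
  next
    case False
    then have "t^2 \<ge> \<delta>^2/2" using nt by linarith
    then show ?thesis by (smt (verit) min.cobounded2 zero_le_power2)
  qed
  have "e^2 + lam^2 * n \<ge> lam^2 * n" by simp
  moreover have "lam^2 * n \<ge> 0" using n0 by simp
  ultimately have "(e^2 + lam^2 * n)^2 \<ge> (lam^2 * n)^2" by (intro power_mono) auto
  then have "Wf lam e p \<ge> lam^4 * (t^2 + n^2)"
    unfolding Wf_def n_def[symmetric] t_def[symmetric] by (simp add: algebra_simps power_mult_distrib power2_eq_square[symmetric] flip: power_mult)
  moreover have "lam^4 * (t^2 + n^2) \<ge> lam^4 * min (\<delta>^4/4) (\<delta>^2/2)"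
    using key assms by (intro mult_left_mono) auto
  ultimately show ?thesis by linarith
qed

definition gf :: "real \<Rightarrow> real \<Rightarrow> real \<Rightarrow> 'n::finite heis \<Rightarrow> real" where
  "gf lam e a p = Wf lam e p powr (- a / 2)"

lemma Wd_bound:
  fixes p v :: "'n::finite heis"
  assumes "norm p \<le> R" "Wf lam e p \<ge> 0"
  shows "\<bar>Wd lam e p v\<bar> \<le> sqrt (Wf lam e p) * (2 * lam^2 + 8 * lam^2 * R) * norm v"
proof -
  define x where "x = fst p" define y where "y = fst (snd p)" define t where "t = snd (snd p)"
  define A where "A = e^2 + lam^2 * (x \<bullet> x + y \<bullet> y)"
  define W where "W = Wf lam e p"
  have W: "W = lam^4 * t^2 + A^2" by (simp add: W_def Wf_def A_def x_def y_def t_def)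
  have A0: "A \<ge> 0" by (simp add: A_def)
  have sA: "A \<le> sqrt W" using W by (intro real_le_rsqrt) simp
  have sT: "lam^2 * \<bar>t\<bar> \<le> sqrt W" using W
    by (intro real_le_rsqrt) (simp add: power_mult_distrib power2_abs flip: power_mult)
  have nx: "norm x \<le> R" "norm y \<le> R" using comps_le_norm[of p] assms(1) by (auto simp: x_def y_def)
  have nv: "norm (fst v) \<le> norm v" "norm (fst (snd v)) \<le> norm v" "\<bar>snd (snd v)\<bar> \<le> norm v"
    using comps_le_norm[of v] by auto
  have e1: "\<bar>x \<bullet> fst v\<bar> \<le> R * norm v"
    using Cauchy_Schwarz_ineq2[of x "fst v"] nx nv by (meson mult_mono' norm_ge_zero order_trans)
  have e2: "\<bar>y \<bullet> fst (snd v)\<bar> \<le> R * norm v"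
    using Cauchy_Schwarz_ineq2[of y "fst (snd v)"] nx nv by (meson mult_mono' norm_ge_zero order_trans)
  have "Wd lam e p v = 2 * lam^2 * (lam^2 * t) * snd (snd v) + 2 * A * lam^2 * (2 * (x \<bullet> fst v) + 2 * (y \<bullet> fst (snd v)))"
    by (simp add: Wd_def A_def x_def y_def t_def algebra_simps power_def)
  also have "\<bar>\<dots>\<bar> \<le> 2 * lam^2 * (lam^2 * \<bar>t\<bar>) * \<bar>snd (snd v)\<bar> + 2 * A * lam^2 * (2 * \<bar>x \<bullet> fst v\<bar> + 2 * \<bar>y \<bullet> fst (snd v)\<bar>)"
    using A0 by (auto simp: abs_mult intro!: order_trans[OF abs_triangle_ineq] mult_left_mono)
  also have "\<dots> \<le> 2 * lam^2 * sqrt W * norm v + 2 * sqrt W * lam^2 * (2 * (R * norm v) + 2 * (R * norm v))"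
    apply (intro add_mono mult_mono sT nv(3) order_refl sA e1 e2)
    using A0 W by auto
  also have "\<dots> = sqrt W * (2 * lam^2 + 8 * lam^2 * R) * norm v" by (simp add: algebra_simps)
  finally show ?thesis by (simp add: W_def)
qed

lemma g_props:
  fixes lam a \<delta> R :: real
  assumes "lam > 0" "a > 0" "\<delta> > 0"
  shows "\<exists>M G. G > 0 \<and> (\<forall>e (z::'n::finite heis). \<delta> \<le> norm z \<longrightarrow> 0 \<le> gf lam e a z \<and> gf lam e a z \<le> G) \<and>
     (\<forall>e (p::'n heis) q. (\<forall>z\<in>closed_segment p q. \<delta> \<le> norm z \<and> norm z \<le> R) \<longrightarrow>
        \<bar>gf lam e a p - gf lam e a q\<bar> \<le> M * norm (p - q))"
proof -
  define m where "m = lam^4 * min (\<delta>^4/4) (\<delta>^2/2)"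
  have m0: "m > 0" using assms by (simp add: m_def)
  have Wm: "\<And>e (z::'n heis). \<delta> \<le> norm z \<Longrightarrow> m \<le> Wf lam e z"
    using Wf_lower assms unfolding m_def by blast
  define G where "G = m powr (- a / 2)"
  have G0: "G > 0" using m0 by (simp add: G_def)
  have gb: "0 \<le> gf lam e a z \<and> gf lam e a z \<le> G" if "\<delta> \<le> norm z" for e and z :: "'n heis"
    using Wm[OF that] m0 assms unfolding gf_def G_def
    by (simp add: powr_mono2')
  define M where "M = G * (a/2) * (2 * lam^2 + 8 * lam^2 * R) / sqrt m"
  have lip: "\<bar>gf lam e a p - gf lam e a q\<bar> \<le> M * norm (p - q)"
    if seg: "\<forall>z\<in>closed_segment p q. \<delta> \<le> norm z \<and> norm z \<le> R" for e and p q :: "'n heis"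
  proof -
    define D where "D (z::'n heis) = (\<lambda>v. (Wf lam e z powr (- a / 2)) * (0 * ln (Wf lam e z) + Wd lam e z v * (- a / 2) / Wf lam e z))" for z
    have der: "(gf lam e a has_derivative D z) (at z within closed_segment p q)"
      if "z \<in> closed_segment p q" for z
    proof -
      have "\<delta> \<le> norm z" using seg that by blast
      then have "Wf lam e z > 0" using Wm[of z e] m0 by linarith
      then show ?thesis unfolding gf_def[abs_def] D_def
        by (intro has_derivative_powr Wf_deriv has_derivative_const) (simp_all add: that)
    qed
    have bnd: "onorm (D z) \<le> M" if "z \<in> closed_segment p q" for z
    proof (rule onorm_le)
      fix v :: "'n heis"
      have zR: "\<delta> \<le> norm z" "norm z \<le> R" using seg that by blast+
      define W where "W = Wf lam e z"
      have Wm': "m \<le> W" using Wm[OF zR(1)] by (simp add: W_def)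
      have W0: "W > 0" using Wm' m0 by simp
      have Wd: "\<bar>Wd lam e z v\<bar> \<le> sqrt W * (2 * lam^2 + 8 * lam^2 * R) * norm v"
        using Wd_bound[OF zR(2), of lam e v] W0 by (simp add: W_def)
      have GW: "W powr (- a / 2) \<le> G" using gb[OF zR(1), of e] by (simp add: gf_def W_def)
      have sq: "sqrt W / W = 1 / sqrt W" using W0
      proof -
        have "sqrt W * sqrt W = W" using W0 by simp
        moreover have "sqrt W > 0" using W0 by simp
        ultimately show ?thesis by (metis nonzero_divide_mult_cancel_left order_less_irrefl)
      qed
      have sqm: "1 / sqrt W \<le> 1 / sqrt m" using Wm' m0 by (intro divide_left_mono) auto
      have "norm (D z v) = W powr (- a / 2) * (a/2) * \<bar>Wd lam e z v\<bar> / W"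
        using W0 assms by (simp add: D_def W_def abs_mult)
      also have "\<dots> \<le> G * (a/2) * (sqrt W * (2 * lam^2 + 8 * lam^2 * R) * norm v) / W"
      proof -
        have h1: "W powr (- a / 2) * (a/2) \<le> G * (a/2)" using GW assms by (intro mult_right_mono) auto
        have h2: "W powr (- a / 2) * (a/2) * \<bar>Wd lam e z v\<bar> \<le> G * (a/2) * (sqrt W * (2 * lam^2 + 8 * lam^2 * R) * norm v)"
          by (rule mult_mono[OF h1 Wd]) (use G0 assms in auto)
        show ?thesis by (rule divide_right_mono[OF h2]) (use W0 in simp)
      qed
      also have "\<dots> = G * (a/2) * (2 * lam^2 + 8 * lam^2 * R) * norm v * (sqrt W / W)"
        using W0 by (simp add: field_simps)
      also have "\<dots> \<le> G * (a/2) * (2 * lam^2 + 8 * lam^2 * R) * norm v * (1 / sqrt m)"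
      proof -
        have "sqrt W / W \<le> 1 / sqrt m" using sq sqm by simp
        moreover have "0 \<le> G * (a/2) * (2 * lam^2 + 8 * lam^2 * R) * norm v"
          using G0 assms zR by (intro mult_nonneg_nonneg) auto
        ultimately show ?thesis by (rule mult_left_mono)
      qed
      also have "\<dots> = M * norm v" by (simp add: M_def)
      finally show "norm (D z v) \<le> M * norm v" .
    qed
    have "norm (gf lam e a p - gf lam e a q) \<le> M * norm (p - q)"
      by (rule differentiable_bound[OF convex_closed_segment der bnd]) auto
    then show ?thesis by simp
  qed
  show ?thesis using G0 gb lip by blast
qed



lemma hn4: "heis_norm (p::'n::finite heis) ^ 4 = (norm (fst p)^2 + norm (fst (snd p))^2)^2 + (snd (snd p))^2"
proof -
  obtain x y t where p: "p = (x, y, t)" by (cases p) auto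
  have q: "(X powr (1/4)) ^ 4 = X" if "X \<ge> 0" for X :: real
  proof (cases "X = 0")
    case False
    then show ?thesis using that by (simp add: powr_power)
  qed simp
  have "((((norm x)^2 + (norm y)^2)^2 + t^2) powr (1/4)) ^ 4 = ((norm x)^2 + (norm y)^2)^2 + t^2"
    by (rule q) simp
  then show ?thesis by (simp add: p heis_norm_def)
qed

lemma hn_nonneg: "heis_norm (p::'n::finite heis) \<ge> 0"
  by (cases p) (simp add: heis_norm_def)

lemma hn_lt_iff: "\<rho> \<ge> 0 \<Longrightarrow> heis_norm (p::'n::finite heis) < \<rho> \<longleftrightarrow> heis_norm p ^ 4 < \<rho> ^ 4"
  using hn_nonneg[of p] by (metis power_less_imp_less_base power_strict_mono zero_less_numeral)

lemma hn_le_iff: "\<rho> \<ge> 0 \<Longrightarrow> heis_norm (p::'n::finite heis) \<le> \<rho> \<longleftrightarrow> heis_norm p ^ 4 \<le> \<rho> ^ 4"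
  using hn_nonneg[of p] power_le_imp_le_base[of _ 3 \<rho>] power_mono[of _ _ 4]
  by (metis numeral_3_eq_3 numeral_Bit0 numeral_eq_Suc pred_numeral_simps(3) add_2_eq_Suc' Suc_numeral semiring_norm(2) semiring_norm(8) order_refl)

lemma ball_bounded:
  assumes "heis_norm (p::'n::finite heis) < \<rho>"
  shows "norm p \<le> sqrt (\<rho>^2 + \<rho>^4)"
proof -
  have r0: "\<rho> > 0" using assms hn_nonneg[of p] by linarith
  define n where "n = norm (fst p)^2 + norm (fst (snd p))^2"
  define t where "t = snd (snd p)"
  have h: "n^2 + t^2 < \<rho>^4" using assms r0 hn_lt_iff[of \<rho> p] hn4[of p] by (simp add: n_def t_def)
  have n0: "n \<ge> 0" by (simp add: n_def)
  have "n^2 < (\<rho>^2)^2" using h by (simp add: power_mult[symmetric]) (smt (verit) zero_le_power2)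
  then have "n < \<rho>^2" using n0 by (meson power_less_imp_less_base zero_le_power2)
  moreover have "t^2 < \<rho>^4" using h n0 by (smt (verit) zero_le_power2)
  ultimately have "norm p ^2 \<le> \<rho>^2 + \<rho>^4"
    using norm_heis_sq[of p] by (simp add: n_def t_def power2_norm_eq_inner)
  then show ?thesis by (simp add: real_le_rsqrt)
qed

lemma outside_ball_norm:
  assumes "r > 0" "\<not> heis_norm (p::'n::finite heis) < r"
  shows "norm p \<ge> min 1 (r^2/2)"
proof (rule ccontr)
  define \<delta> where "\<delta> = min 1 (r^2/2)"
  assume "\<not> norm p \<ge> min 1 (r^2/2)"
  then have np: "norm p < \<delta>" unfolding \<delta>_def by linarith
  have d0: "\<delta> > 0" using assms by (simp add: \<delta>_def)
  define n where "n = norm (fst p)^2 + norm (fst (snd p))^2"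
  define t where "t = snd (snd p)"
  have "norm p ^ 2 < \<delta>^2" using np by (simp add: power_strict_mono)
  then have nt: "n + t^2 < \<delta>^2" using norm_heis_sq[of p] by (simp add: n_def t_def power2_norm_eq_inner)
  have n0: "n \<ge> 0" by (simp add: n_def)
  have "n < \<delta>^2" using nt by (smt (verit) zero_le_power2)
  then have "n^2 \<le> (\<delta>^2)^2" using n0 by (intro power_mono) auto
  moreover have "\<delta>^2 \<le> 1" using d0 by (simp add: \<delta>_def power_le_one)
  moreover have "(\<delta>^2)^2 \<le> \<delta>^2" using calculation(2) d0 by (simp add: power_le_one power2_eq_square mult_le_cancel_left1)
  ultimately have "n^2 + t^2 < 2 * \<delta>^2" using nt n0 by linarith
  also have "\<dots> \<le> r^4"
  proof -
    have "\<delta> \<le> r^2/2" by (simp add: \<delta>_def)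
    then have "\<delta>^2 \<le> (r^2/2)^2" using d0 by (intro power_mono) auto
    then have "4 * \<delta>^2 \<le> r^4" by (simp add: power2_eq_square power4_eq_xxxx field_simps)
    moreover have "\<delta>^2 \<ge> 0" by simp
    ultimately show ?thesis by linarith
  qed
  finally have "heis_norm p ^ 4 < r^4" using hn4[of p] by (simp add: n_def t_def)
  then show False using assms hn_lt_iff[of r p] by simp
qed

lemma pow4_le: "(a::real)^4 \<le> b^4 \<Longrightarrow> 0 \<le> b \<Longrightarrow> a \<le> b"
  by (rule power_le_imp_le_base[of _ 3]) simp_all

lemma mult_dist:
  fixes \<xi> \<eta> :: "'n::finite heis"
  assumes "heis_norm (heis_mult (heis_inv \<eta>) \<xi>) \<le> d" "d \<le> 1"
  shows "norm (\<xi> - \<eta>) \<le> d * (3 + 4 * norm \<eta>)" "norm (\<xi> - \<eta>) \<le> d * (3 + 4 * norm \<xi>)"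
proof -
  obtain x1 y1 t1 where e1: "\<xi> = (x1, y1, t1)" by (cases \<xi>) auto
  obtain x2 y2 t2 where e2: "\<eta> = (x2, y2, t2)" by (cases \<eta>) auto
  define dx where "dx = x1 - x2" define dy where "dy = y1 - y2"
  define wt where "wt = t1 - t2 + 2 * (x1 \<bullet> (- y2) - y1 \<bullet> (- x2))"
  have w: "heis_mult (heis_inv \<eta>) \<xi> = (dx, dy, wt)"
    by (simp add: e1 e2 heis_mult_def heis_inv_def dx_def dy_def wt_def algebra_simps)
  have d0: "d \<ge> 0" using assms(1) hn_nonneg by (metis order_trans)
  have h: "(norm dx^2 + norm dy^2)^2 + wt^2 \<le> d^4"
    using assms(1) hn_le_iff[OF d0, of "heis_mult (heis_inv \<eta>) \<xi>"] hn4[of "heis_mult (heis_inv \<eta>) \<xi>"]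
    by (simp add: w)
  have "(norm dx^2)^2 \<le> (norm dx^2 + norm dy^2)^2" by (intro power_mono) auto
  then have "norm dx ^ 4 \<le> d ^ 4" using h by (simp add: power_mult[symmetric]) (smt (verit) zero_le_power2)
  then have ndx: "norm dx \<le> d" using d0 by (rule pow4_le)
  have "(norm dy^2)^2 \<le> (norm dx^2 + norm dy^2)^2" by (intro power_mono) auto
  then have "norm dy ^ 4 \<le> d ^ 4" using h by (simp add: power_mult[symmetric]) (smt (verit) zero_le_power2)
  then have ndy: "norm dy \<le> d" using d0 by (rule pow4_le)
  have "wt^2 \<le> (d^2)^2" using h by (simp add: power_mult[symmetric]) (smt (verit) zero_le_power2)
  then have "\<bar>wt\<bar> \<le> \<bar>d^2\<bar>" by (simp only: abs_le_square_iff)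
  then have "\<bar>wt\<bar> \<le> d^2" by simp
  also have "d^2 \<le> d" using mult_left_mono[OF assms(2) d0] by (simp add: power2_eq_square)
  finally have nwt: "\<bar>wt\<bar> \<le> d" .
  have tA: "t1 - t2 = wt + 2 * (dx \<bullet> y2) - 2 * (dy \<bullet> x2)"
    by (simp add: wt_def dx_def dy_def inner_diff_left inner_commute algebra_simps)
  have tB: "t1 - t2 = wt + 2 * (dx \<bullet> y1) - 2 * (dy \<bullet> x1)"
    by (simp add: wt_def dx_def dy_def inner_diff_left inner_diff_right inner_commute algebra_simps)
  have nrm: "norm (\<xi> - \<eta>) \<le> norm dx + norm dy + \<bar>t1 - t2\<bar>"
  proof -
    have "norm (\<xi> - \<eta>) = norm (dx, (dy, t1 - t2))" by (simp add: e1 e2 dx_def dy_def)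
    also have "\<dots> \<le> norm dx + norm (dy, t1 - t2)" by (rule norm_Pair_le)
    also have "norm (dy, t1 - t2) \<le> norm dy + norm (t1 - t2)" by (rule norm_Pair_le)
    finally show ?thesis by simp
  qed
  have cs: "\<bar>u \<bullet> v\<bar> \<le> d * norm v" if "norm u \<le> d" for u v :: "real^'n"
    using Cauchy_Schwarz_ineq2[of u v] that by (meson mult_right_mono norm_ge_zero order_trans)
  have nx2: "norm x2 \<le> norm \<eta>" "norm y2 \<le> norm \<eta>" using comps_le_norm[of \<eta>] by (auto simp: e2)
  have nx1: "norm x1 \<le> norm \<xi>" "norm y1 \<le> norm \<xi>" using comps_le_norm[of \<xi>] by (auto simp: e1)
  have "\<bar>t1 - t2\<bar> \<le> d + 2 * (d * norm y2) + 2 * (d * norm x2)"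
    unfolding tA using nwt cs[OF ndx, of y2] cs[OF ndy, of x2] by linarith
  also have "\<dots> \<le> d + 2 * (d * norm \<eta>) + 2 * (d * norm \<eta>)"
    using nx2 d0 by (intro add_mono mult_left_mono order_refl) auto
  finally show "norm (\<xi> - \<eta>) \<le> d * (3 + 4 * norm \<eta>)" using nrm ndx ndy by (simp add: algebra_simps)
  have "\<bar>t1 - t2\<bar> \<le> d + 2 * (d * norm y1) + 2 * (d * norm x1)"
    unfolding tB using nwt cs[OF ndx, of y1] cs[OF ndy, of x1] by linarith
  also have "\<dots> \<le> d + 2 * (d * norm \<xi>) + 2 * (d * norm \<xi>)"
    using nx1 d0 by (intro add_mono mult_left_mono order_refl) auto
  finally show "norm (\<xi> - \<eta>) \<le> d * (3 + 4 * norm \<xi>)" using nrm ndx ndy by (simp add: algebra_simps)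
qed



lemma Ueps_eq:
  fixes p :: "'n::finite heis" and S C0 s \<epsilon> a :: real
  assumes "\<epsilon> > 0" and a_def: "a = (heis_Q p - 2 * s) / 2"
  shows "bubble_Ueps S C0 s \<epsilon> p =
    (C0 / Lp_norm (crit_exp p s) (bubble_U C0 s :: 'n heis \<Rightarrow> real)) * \<epsilon> powr a * gf (S powr (- 1 / (2 * s))) \<epsilon> a p"
proof -
  obtain x y t where p: "p = (x, y, t)" by (cases p) auto
  define lam where "lam = S powr (- 1 / (2 * s))"
  define L where "L = Lp_norm (crit_exp p s) (bubble_U C0 s :: 'n heis \<Rightarrow> real)"
  define W where "W = Wf lam \<epsilon> p"
  have W0: "W \<ge> 0" by (simp add: W_def Wf_def)
  have inner: "(lam^2 * ((1/\<epsilon>)^2 * t))^2 + (1 + (norm (lam *\<^sub>R ((1/\<epsilon>) *\<^sub>R x)))^2 + (norm (lam *\<^sub>R ((1/\<epsilon>) *\<^sub>R y)))^2)^2 = W / \<epsilon>^4"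
  proof -
    have nx: "norm (lam *\<^sub>R ((1/\<epsilon>) *\<^sub>R v))^2 = (lam/\<epsilon>)^2 * (v \<bullet> v)" for v :: "real^'n"
      by (simp add: power2_norm_eq_inner[symmetric] power_mult_distrib power_divide)
    define q where "q = 1 / \<epsilon>"
    define n where "n = x \<bullet> x + y \<bullet> y"
    have eq: "\<epsilon> * q = 1" using assms(1) by (simp add: q_def)
    have d: "W / \<epsilon>^4 = W * q^4" by (simp add: q_def power_one_over divide_inverse power_inverse)
    have r1: "(\<epsilon>^2 + lam^2 * n)^2 * q^4 = ((\<epsilon> * q)^2 + lam^2 * q^2 * n)^2" by algebra
    have "(lam^2 * (q^2 * t))^2 + (1 + (lam * q)^2 * (x \<bullet> x) + (lam * q)^2 * (y \<bullet> y))^2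
          = lam^4 * t^2 * q^4 + (1 + lam^2 * q^2 * n)^2" by (simp add: n_def algebra_simps power_mult_distrib)
    also have "\<dots> = W * q^4" unfolding W_def Wf_def p using r1 eq by (simp add: n_def algebra_simps)
    finally show ?thesis unfolding nx d by (simp add: q_def divide_inverse power_mult_distrib)
  qed
  have ex: "- (heis_Q q - 2 * s) / 4 = - a / 2" for q :: "'n heis" by (simp add: a_def heis_Q_def field_simps)
  have U: "bubble_U C0 s ((x', y', t')::'n heis) = C0 * (t'^2 + (1 + norm x'^2 + norm y'^2)^2) powr (- a / 2)" for x' y' t'
    by (simp only: bubble_U_def prod.case ex)
  have ub: "bubble_ubar C0 s q = bubble_U C0 s q / L" for q :: "'n heis"
    by (simp add: bubble_ubar_def L_def crit_exp_def heis_Q_def)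
  have ue: "bubble_Ueps S C0 s \<epsilon> p = \<epsilon> powr (- a) * bubble_ubar C0 s (heis_dil lam (heis_dil (1/\<epsilon>) p))"
  proof -
    have ea: "- (heis_Q p - 2 * s) / 2 = - a" unfolding a_def by linarith
    show ?thesis by (simp only: bubble_Ueps_def bubble_ustar_def ea lam_def)
  qed
  have dl: "heis_dil lam (heis_dil (1/\<epsilon>) p) = (lam *\<^sub>R ((1/\<epsilon>) *\<^sub>R x), lam *\<^sub>R ((1/\<epsilon>) *\<^sub>R y), lam^2 * ((1/\<epsilon>)^2 * t))"
    by (simp add: p heis_dil_def)
  have "bubble_Ueps S C0 s \<epsilon> p = \<epsilon> powr (- a) * (C0 * (W / \<epsilon>^4) powr (- a / 2) / L)"
    unfolding ue dl ub U inner ..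
  also have "(W / \<epsilon>^4) powr (- a / 2) = W powr (- a / 2) * \<epsilon> powr (2 * a)"
  proof -
    have e4: "\<epsilon>^4 = \<epsilon> powr 4" using powr_realpow[OF assms(1), of 4] by simp
    have "(W / \<epsilon>^4) powr (- a / 2) = W powr (- a / 2) / (\<epsilon>^4) powr (- a / 2)"
      by (rule powr_divide)
    also have "(\<epsilon>^4) powr (- a / 2) = \<epsilon> powr (- (2 * a))" unfolding e4 powr_powr by simp
    also have "W powr (- a / 2) / \<epsilon> powr (- (2 * a)) = W powr (- a / 2) * \<epsilon> powr (2 * a)"
      by (simp only: powr_minus divide_inverse inverse_inverse_eq)
    finally show ?thesis .
  qed
  finally have "bubble_Ueps S C0 s \<epsilon> p = C0 / L * (\<epsilon> powr (- a) * \<epsilon> powr (2 * a)) * W powr (- a / 2)"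
    by simp
  also have "\<epsilon> powr (- a) * \<epsilon> powr (2 * a) = \<epsilon> powr a"
    by (simp add: powr_add[symmetric])
  finally show ?thesis by (simp add: gf_def W_def L_def lam_def)
qed



lemma scale_bound:
  fixes K e u v X Y C :: real
  assumes "e \<ge> 0" "\<bar>u - v\<bar> \<le> X * Y" "Y \<ge> 0" "\<bar>K\<bar> * X \<le> C"
  shows "\<bar>K * e * u - K * e * v\<bar> \<le> C * e * Y"
proof -
  have "\<bar>K * e * u - K * e * v\<bar> = \<bar>K\<bar> * e * \<bar>u - v\<bar>"
    using assms(1) by (simp add: abs_mult right_diff_distrib[symmetric] mult.assoc)
  also have "\<dots> \<le> \<bar>K\<bar> * e * (X * Y)" using assms by (intro mult_left_mono) auto
  also have "\<dots> = (\<bar>K\<bar> * X) * (e * Y)" by (simp add: mult_ac)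
  also have "\<dots> \<le> C * (e * Y)" using assms by (intro mult_right_mono) auto
  finally show ?thesis by (simp add: mult_ac)
qed

theorem lemma3p10:
  fixes \<Omega> :: "'n::finite heis set"
    and \<phi> :: "'n heis \<Rightarrow> real"
    and r s S C0 :: real
  assumes "0 < s" "s < 1"
    and "S > 0"
    and "C0 > 0"
    and "open \<Omega>" "bounded \<Omega>"
    and "r > 0" "heis_ball (4 * r) \<subseteq> \<Omega>"
    and "smooth_fun \<phi>"
    and "\<And>p. 0 \<le> \<phi> p \<and> \<phi> p \<le> 1"
    and "\<And>p. p \<in> heis_ball r \<Longrightarrow> \<phi> p = 1"
    and "\<And>p. p \<notin> heis_ball (2 * r) \<Longrightarrow> \<phi> p = 0"
  shows "\<exists>rb > 0. \<exists>C > 0. \<forall>\<epsilon> > 0.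
    (\<forall>\<xi> \<eta>. \<eta> \<notin> heis_ball r \<and> heis_norm (heis_mult (heis_inv \<eta>) \<xi>) \<le> rb \<longrightarrow>
        \<bar>bubble_Ueps S C0 s \<epsilon> \<xi> * \<phi> \<xi> - bubble_Ueps S C0 s \<epsilon> \<eta> * \<phi> \<eta>\<bar>
          \<le> C * \<epsilon> powr ((heis_Q \<xi> - 2 * s) / 2) * heis_norm (heis_mult (heis_inv \<eta>) \<xi>)) \<and>
    (\<forall>\<xi> \<eta>. \<xi> \<notin> heis_ball r \<and> \<eta> \<notin> heis_ball r \<longrightarrow>
        \<bar>bubble_Ueps S C0 s \<epsilon> \<xi> * \<phi> \<xi> - bubble_Ueps S C0 s \<epsilon> \<eta> * \<phi> \<eta>\<bar>
          \<le> C * \<epsilon> powr ((heis_Q \<xi> - 2 * s) / 2) * min 1 (heis_norm (heis_mult (heis_inv \<eta>) \<xi>)))"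
proof -
  define Q where "Q = real (2 * CARD('n) + 2)"
  have hQ: "heis_Q (q::'n heis) = Q" for q by (simp add: heis_Q_def Q_def)
  define a where "a = (Q - 2 * s) / 2"
  have a0: "a > 0" using assms(2) by (simp add: a_def Q_def)
  define lam where "lam = S powr (- 1 / (2 * s))"
  have lam0: "lam > 0" using assms(3) by (simp add: lam_def)
  define K where "K = C0 / Lp_norm (crit_exp (0::'n heis) s) (bubble_U C0 s :: 'n heis \<Rightarrow> real)"
  have Ue: "bubble_Ueps S C0 s \<epsilon> p = K * \<epsilon> powr a * gf lam \<epsilon> a p" if "\<epsilon> > 0" for \<epsilon> and p :: "'n heis"
  proof -
    have "crit_exp p s = crit_exp (0::'n heis) s" by (simp add: crit_exp_def heis_Q_def)
    then show ?thesis using Ueps_eq[OF that, of a p s S C0] by (simp add: a_def hQ K_def lam_def)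
  qed
  define \<delta> where "\<delta> = min 1 (r^2/2)"
  have d0: "\<delta> > 0" using assms(7) by (simp add: \<delta>_def)
  define R0 where "R0 = sqrt ((2 * r)^2 + (2 * r)^4)"
  have R00: "R0 \<ge> 0" by (simp add: R0_def)
  have in2: "norm p \<le> R0" if "\<phi> p \<noteq> 0" for p :: "'n heis"
  proof -
    have "p \<in> heis_ball (2 * r)" using assms(12) that by blast
    then show ?thesis unfolding R0_def heis_ball_def by (intro ball_bounded) simp
  qed
  have out: "norm p \<ge> \<delta>" if "p \<notin> heis_ball r" for p :: "'n heis"
    using outside_ball_norm[OF assms(7), of p] that by (simp add: \<delta>_def heis_ball_def)
  have "Ck (Suc 0) \<phi>" using assms(9) by (simp add: smooth_fun_def del: Ck.simps)
  then obtain L\<phi> where L\<phi>: "\<And>x y. norm x \<le> R0 + \<delta> \<Longrightarrow> norm y \<le> R0 + \<delta> \<Longrightarrow> \<bar>\<phi> x - \<phi> y\<bar> \<le> L\<phi> * norm (x - y)"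
    using phi_lip[of \<phi> "R0 + \<delta>"] by blast
  obtain Mg G where G0: "G > 0"
    and gb: "\<And>e (z::'n heis). \<delta>/2 \<le> norm z \<Longrightarrow> 0 \<le> gf lam e a z \<and> gf lam e a z \<le> G"
    and glip: "\<And>e (p::'n heis) q. (\<forall>z\<in>closed_segment p q. \<delta>/2 \<le> norm z \<and> norm z \<le> R0 + \<delta>) \<Longrightarrow>
        \<bar>gf lam e a p - gf lam e a q\<bar> \<le> Mg * norm (p - q)"
  proof -
    have "\<delta>/2 > 0" using d0 by simp
    from g_props[OF lam0 a0 this, of "R0 + \<delta>"] show ?thesis using that by blast
  qed
  define rb where "rb = min 1 (\<delta> / (2 * (3 + 4 * R0)))"
  have rb0: "rb > 0" using d0 R00 by (simp add: rb_def)
  have rb1: "rb \<le> 1" by (simp add: rb_def)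
  define M1 where "M1 = (G * \<bar>L\<phi>\<bar> + \<bar>Mg\<bar>) * (3 + 4 * R0)"
  have M10: "M1 \<ge> 0" using G0 R00 by (simp add: M1_def)
  have P1: "\<bar>gf lam e a \<xi> * \<phi> \<xi> - gf lam e a \<eta> * \<phi> \<eta>\<bar> \<le> M1 * heis_norm (heis_mult (heis_inv \<eta>) \<xi>)"
    if \<eta>out: "\<eta> \<notin> heis_ball r" and dle: "heis_norm (heis_mult (heis_inv \<eta>) \<xi>) \<le> rb" for e and \<xi> \<eta> :: "'n heis"
  proof -
    define d where "d = heis_norm (heis_mult (heis_inv \<eta>) \<xi>)"
    have dd0: "d \<ge> 0" by (simp add: d_def hn_nonneg)
    have dr: "d \<le> rb" using dle by (simp add: d_def)
    show ?thesis
    proof (cases "\<phi> \<xi> = 0 \<and> \<phi> \<eta> = 0")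
      case True
      then show ?thesis using M10 dd0 by (simp add: d_def[symmetric])
    next
      case False
      have d1: "d \<le> 1" using dr rb1 by linarith
      have nb: "norm (\<xi> - \<eta>) \<le> d * (3 + 4 * R0)"
      proof (cases "\<phi> \<eta> = 0")
        case True
        then have "\<phi> \<xi> \<noteq> 0" using False by blast
        then have "norm \<xi> \<le> R0" by (rule in2)
        moreover have "norm (\<xi> - \<eta>) \<le> d * (3 + 4 * norm \<xi>)" using mult_dist(2)[of \<eta> \<xi> d] d1 by (simp add: d_def)
        ultimately show ?thesis using dd0 by (smt (verit) mult_left_mono)
      next
        case False
        then have "norm \<eta> \<le> R0" by (rule in2)
        moreover have "norm (\<xi> - \<eta>) \<le> d * (3 + 4 * norm \<eta>)" using mult_dist(1)[of \<eta> \<xi> d] d1 by (simp add: d_def)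
        ultimately show ?thesis using dd0 by (smt (verit) mult_left_mono)
      qed
      have "d * (3 + 4 * R0) \<le> rb * (3 + 4 * R0)" using dr R00 by (intro mult_right_mono) auto
      also have "\<dots> \<le> \<delta> / (2 * (3 + 4 * R0)) * (3 + 4 * R0)" using R00 by (intro mult_right_mono) (auto simp: rb_def)
      also have "\<dots> = \<delta> / 2" using R00 by (simp add: field_simps)
      finally have nd: "norm (\<xi> - \<eta>) \<le> \<delta> / 2" using nb by linarith
      have ne: "norm \<eta> \<ge> \<delta>" using out[OF \<eta>out] .
      have both: "norm \<xi> \<le> R0 + \<delta>/2 \<and> norm \<eta> \<le> R0 + \<delta>/2"
      proof (cases "\<phi> \<eta> = 0")
        case True
        then have "\<phi> \<xi> \<noteq> 0" using False by blast
        then have "norm \<xi> \<le> R0" by (rule in2)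
        moreover have "norm \<eta> \<le> norm \<xi> + norm (\<xi> - \<eta>)" by (metis norm_minus_commute norm_triangle_sub)
        ultimately show ?thesis using nd d0 by linarith
      next
        case False
        then have "norm \<eta> \<le> R0" by (rule in2)
        moreover have "norm \<xi> \<le> norm \<eta> + norm (\<xi> - \<eta>)" by (metis norm_triangle_sub)
        ultimately show ?thesis using nd d0 by linarith
      qed
      have seg: "\<forall>z\<in>closed_segment \<xi> \<eta>. \<delta>/2 \<le> norm z \<and> norm z \<le> R0 + \<delta>"
      proof
        fix z assume "z \<in> closed_segment \<xi> \<eta>"
        then have "norm (z - \<eta>) \<le> norm (\<eta> - \<xi>)" by (rule segment_bound(2))
        then have zn: "norm (z - \<eta>) \<le> \<delta>/2" using nd by (simp add: norm_minus_commute)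
        have "norm \<eta> \<le> norm z + norm (z - \<eta>)" by (metis norm_minus_commute norm_triangle_sub)
        moreover have "norm z \<le> norm \<eta> + norm (z - \<eta>)" by (metis norm_triangle_sub)
        ultimately show "\<delta>/2 \<le> norm z \<and> norm z \<le> R0 + \<delta>" using zn ne both d0 by linarith
      qed
      have xi_in: "\<delta>/2 \<le> norm \<xi>" using seg by auto
      define n where "n = norm (\<xi> - \<eta>)"
      have n0: "n \<ge> 0" by (simp add: n_def)
      have gx: "0 \<le> gf lam e a \<xi> \<and> gf lam e a \<xi> \<le> G" using gb[OF xi_in] .
      have pl: "\<bar>\<phi> \<xi> - \<phi> \<eta>\<bar> \<le> \<bar>L\<phi>\<bar> * n"
      proof -
        have "\<bar>\<phi> \<xi> - \<phi> \<eta>\<bar> \<le> L\<phi> * n" using L\<phi>[of \<xi> \<eta>] both d0 unfolding n_def by linarith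
        moreover have "L\<phi> * n \<le> \<bar>L\<phi>\<bar> * n" using n0 by (intro mult_right_mono) auto
        ultimately show ?thesis by linarith
      qed
      have gl: "\<bar>gf lam e a \<xi> - gf lam e a \<eta>\<bar> \<le> \<bar>Mg\<bar> * n"
      proof -
        have "\<bar>gf lam e a \<xi> - gf lam e a \<eta>\<bar> \<le> Mg * n" using glip[OF seg, of e] unfolding n_def .
        moreover have "Mg * n \<le> \<bar>Mg\<bar> * n" using n0 by (intro mult_right_mono) auto
        ultimately show ?thesis by linarith
      qed
      have ph: "\<bar>\<phi> \<eta>\<bar> \<le> 1" using assms(10)[of \<eta>] by auto
      have "gf lam e a \<xi> * \<phi> \<xi> - gf lam e a \<eta> * \<phi> \<eta> =
            gf lam e a \<xi> * (\<phi> \<xi> - \<phi> \<eta>) + \<phi> \<eta> * (gf lam e a \<xi> - gf lam e a \<eta>)"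
        by (simp add: algebra_simps)
      then have "\<bar>gf lam e a \<xi> * \<phi> \<xi> - gf lam e a \<eta> * \<phi> \<eta>\<bar> \<le>
           \<bar>gf lam e a \<xi>\<bar> * \<bar>\<phi> \<xi> - \<phi> \<eta>\<bar> + \<bar>\<phi> \<eta>\<bar> * \<bar>gf lam e a \<xi> - gf lam e a \<eta>\<bar>"
        using abs_triangle_ineq[of "gf lam e a \<xi> * (\<phi> \<xi> - \<phi> \<eta>)" "\<phi> \<eta> * (gf lam e a \<xi> - gf lam e a \<eta>)"]
        by (simp only: abs_mult)
      also have "\<dots> \<le> G * (\<bar>L\<phi>\<bar> * n) + 1 * (\<bar>Mg\<bar> * n)"
        using gx pl gl ph by (intro add_mono mult_mono) auto
      also have "\<dots> = (G * \<bar>L\<phi>\<bar> + \<bar>Mg\<bar>) * n" by (simp add: algebra_simps)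
      also have "\<dots> \<le> (G * \<bar>L\<phi>\<bar> + \<bar>Mg\<bar>) * (d * (3 + 4 * R0))"
        using nb G0 unfolding n_def by (intro mult_left_mono) auto
      also have "\<dots> = M1 * d" by (simp add: M1_def algebra_simps)
      finally show ?thesis by (simp add: d_def)
    qed
  qed
  have P2: "\<bar>gf lam e a p * \<phi> p\<bar> \<le> G" if "p \<notin> heis_ball r" for e and p :: "'n heis"
  proof -
    have "\<delta>/2 \<le> norm p" using out[OF that] d0 by linarith
    then have "0 \<le> gf lam e a p \<and> gf lam e a p \<le> G" by (rule gb)
    moreover have "0 \<le> \<phi> p \<and> \<phi> p \<le> 1" by (rule assms(10))
    ultimately have h1: "0 \<le> gf lam e a p" "gf lam e a p \<le> G" "0 \<le> \<phi> p" "\<phi> p \<le> 1" by auto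
    have "gf lam e a p * \<phi> p \<le> G * 1" by (rule mult_mono) (use h1 G0 in auto)
    moreover have "0 \<le> gf lam e a p * \<phi> p" using h1 by simp
    ultimately show ?thesis by simp
  qed
  define X where "X = max M1 (2 * G / rb)"
  define C where "C = \<bar>K\<bar> * X + 1"
  have X0: "X \<ge> 0" using M10 by (simp add: X_def)
  have C0': "C > 0" using X0 unfolding C_def by (smt (verit) abs_ge_zero mult_nonneg_nonneg)
  have KX2: "\<bar>K\<bar> * X \<le> C" by (simp add: C_def)
  have "\<bar>K\<bar> * M1 \<le> \<bar>K\<bar> * X" by (intro mult_left_mono) (auto simp: X_def)
  then have KX: "\<bar>K\<bar> * M1 \<le> C" "\<bar>K\<bar> * X \<le> C" using KX2 by linarith+
  show ?thesis
  proof (rule exI[of _ rb], rule conjI[OF rb0], rule exI[of _ C], rule conjI[OF C0'], rule allI, rule impI, rule conjI)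
    fix \<epsilon> :: real assume e0: "\<epsilon> > 0"
    note e0' = e0
    have ea: "\<epsilon> powr ((heis_Q \<xi> - 2 * s) / 2) = \<epsilon> powr a" for \<xi> :: "'n heis" by (simp add: hQ a_def)
    have epos: "\<epsilon> powr a \<ge> 0" by simp
    show "\<forall>\<xi> \<eta>. \<eta> \<notin> heis_ball r \<and> heis_norm (heis_mult (heis_inv \<eta>) \<xi>) \<le> rb \<longrightarrow>
        \<bar>bubble_Ueps S C0 s \<epsilon> \<xi> * \<phi> \<xi> - bubble_Ueps S C0 s \<epsilon> \<eta> * \<phi> \<eta>\<bar>
          \<le> C * \<epsilon> powr ((heis_Q \<xi> - 2 * s) / 2) * heis_norm (heis_mult (heis_inv \<eta>) \<xi>)"
    proof (intro allI impI)
      fix \<xi> \<eta> :: "'n heis"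
      assume h: "\<eta> \<notin> heis_ball r \<and> heis_norm (heis_mult (heis_inv \<eta>) \<xi>) \<le> rb"
      have "\<bar>K * \<epsilon> powr a * (gf lam \<epsilon> a \<xi> * \<phi> \<xi>) - K * \<epsilon> powr a * (gf lam \<epsilon> a \<eta> * \<phi> \<eta>)\<bar>
          \<le> C * \<epsilon> powr a * heis_norm (heis_mult (heis_inv \<eta>) \<xi>)"
        using P1[of \<eta> \<xi> \<epsilon>] h by (intro scale_bound[OF epos _ hn_nonneg KX(1)]) auto
      then show "\<bar>bubble_Ueps S C0 s \<epsilon> \<xi> * \<phi> \<xi> - bubble_Ueps S C0 s \<epsilon> \<eta> * \<phi> \<eta>\<bar>
          \<le> C * \<epsilon> powr ((heis_Q \<xi> - 2 * s) / 2) * heis_norm (heis_mult (heis_inv \<eta>) \<xi>)"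
        by (simp only: Ue[OF e0] ea mult.assoc)
    qed
    show "\<forall>\<xi> \<eta>. \<xi> \<notin> heis_ball r \<and> \<eta> \<notin> heis_ball r \<longrightarrow>
        \<bar>bubble_Ueps S C0 s \<epsilon> \<xi> * \<phi> \<xi> - bubble_Ueps S C0 s \<epsilon> \<eta> * \<phi> \<eta>\<bar>
          \<le> C * \<epsilon> powr ((heis_Q \<xi> - 2 * s) / 2) * min 1 (heis_norm (heis_mult (heis_inv \<eta>) \<xi>))"
    proof (intro allI impI)
      fix \<xi> \<eta> :: "'n heis"
      assume h: "\<xi> \<notin> heis_ball r \<and> \<eta> \<notin> heis_ball r"
      define d where "d = heis_norm (heis_mult (heis_inv \<eta>) \<xi>)"
      have dd0: "d \<ge> 0" by (simp add: d_def hn_nonneg)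
      have main: "\<bar>gf lam \<epsilon> a \<xi> * \<phi> \<xi> - gf lam \<epsilon> a \<eta> * \<phi> \<eta>\<bar> \<le> X * min 1 d"
      proof (cases "d \<le> rb")
        case True
        then have "\<bar>gf lam \<epsilon> a \<xi> * \<phi> \<xi> - gf lam \<epsilon> a \<eta> * \<phi> \<eta>\<bar> \<le> M1 * d"
          using P1[of \<eta> \<xi> \<epsilon>] h by (simp add: d_def)
        also have "\<dots> \<le> X * d" using dd0 by (intro mult_right_mono) (auto simp: X_def)
        also have "X * d = X * min 1 d" using True rb1 by simp
        finally show ?thesis .
      next
        case False
        have "\<bar>gf lam \<epsilon> a \<xi> * \<phi> \<xi> - gf lam \<epsilon> a \<eta> * \<phi> \<eta>\<bar> \<le> G + G"
          using P2[of \<xi> \<epsilon>] P2[of \<eta> \<epsilon>] h by linarith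
        also have "\<dots> = (2 * G / rb) * rb" using rb0 by simp
        also have "\<dots> \<le> X * rb" using rb0 by (intro mult_right_mono) (auto simp: X_def)
        also have "\<dots> \<le> X * min 1 d" using False rb1 X0 by (intro mult_left_mono) auto
        finally show ?thesis .
      qed
      have "\<bar>K * \<epsilon> powr a * (gf lam \<epsilon> a \<xi> * \<phi> \<xi>) - K * \<epsilon> powr a * (gf lam \<epsilon> a \<eta> * \<phi> \<eta>)\<bar>
          \<le> C * \<epsilon> powr a * min 1 d"
        using main dd0 by (intro scale_bound[OF epos _ _ KX(2)]) auto
      then show "\<bar>bubble_Ueps S C0 s \<epsilon> \<xi> * \<phi> \<xi> - bubble_Ueps S C0 s \<epsilon> \<eta> * \<phi> \<eta>\<bar>
          \<le> C * \<epsilon> powr ((heis_Q \<xi> - 2 * s) / 2) * min 1 (heis_norm (heis_mult (heis_inv \<eta>) \<xi>))"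
        by (simp only: Ue[OF e0] ea mult.assoc d_def)
    qed
  qed
qed

end
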